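(* Let $K$ be a field, $X$ a set, $>$ a semigroup well-ordering on $X^\dagger$, and $F=(F_T,F_P)$ with $F_T\subseteq K[\dashv\! X^\dagger]$ and $F_P\subseteq K[X^\dagger]$. If $f$ is an S-polynomial resulting from a match of $F$, then the equivalence relations $\stackrel{*}{\leftrightarrow}_F$ and $\stackrel{*}{\leftrightarrow}_{F\cup\{f\}}$ on $K[\dashv\! X^\dagger]$ coincide (where $f$ is added to the tagged part if $f$ is tagged and to the untagged part otherwise).
   Context: $X^\dagger$ is the free semigroup of nonempty words on $X$, $X^*$ the free monoid (empty word $id$), $K[X^\dagger]$ the free noncommutative $K$-algebra. A semigroup well-ordering is a well-ordering $>$ on $X^\dagger$ with $m_1>m_2\Rightarrow um_1v>um_2v$ for all $u,v\in X^*$. For a nonzero polynomial, $\mathtt{LT}$ is its largest term and $\mathtt{LC}$ its coefficient. The paper assumes all polynomials are monic (leading coefficient $1$). Tagged polynomials: $\dashv$ is a symbol; $K[\dashv\! X^\dagger]$ is the $K$-vector space with basis the tagged terms $\dashv\! m$ ($m\in X^\dagger$), a right $K[X^\dagger]$-module via $(\dashv\! m)w=\dashv\!(mw)$. For $p=\sum k_im_i\in K[X^\dagger]$, $w\in X^*$: $\dashv\! w\,p:=\sum k_i\dashv\!(wm_i)$. Tagged terms are ordered by $\dashv\! m_1>\dashv\! m_2\iff m_1>m_2$. Reduction: $f\to_F f-k f_iv$ if $f_i\in F_T$, $v\in X^*$ and $\mathtt{LT}(f_i)v$ occurs in $f$ with coefficient $k\neq0$; and $f\to_F f-k\dashv\!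 w\,f_i\,v$ if $f_i\in F_P$, $w,v\in X^*$ and $\dashv\!(w\,\mathtt{LT}(f_i)\,v)$ occurs in $f$ with coefficient $k\neq0$. $\stackrel{*}{\leftrightarrow}_F$ is the reflexive, symmetric, transitive closure of $\to_F$. Matches and S-polynomials: for $f_1,f_2\in F$ with leading terms $m_1,m_2$: (i) $f_1,f_2\in F_T$, $m_1v=m_2$ ($v\in X^*$): S-polynomial $f_1v-f_2$; (ii) $f_1\in F_T,f_2\in F_P$, $m_1v=\dashv\! u\,m_2$ ($u,v\in X^*$): $f_1v-\dashv\! u\,f_2$; (iii) $f_1\in F_T,f_2\in F_P$, $m_1=\dashv\!(um_2v)$: $f_1-\dashv\! u\,f_2\,v$; (iv) $f_1,f_2\in F_P$, $um_1=m_2v$ ($u,v\in X^*$): $uf_1-f_2v$; (v) $f_1,f_2\in F_P$, $m_1=um_2v$: $f_1-uf_2v$. S-polynomials of types (i)–(iii) are tagged, those of types (iv)–(v) are untagged elements of $K[X^\dagger]$. *)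

theory Defs
  imports "HOL-Library.Poly_Mapping"
begin

text \<open>Words over the alphabet (the type 'x plays the role of the set X) are lists;
  X^dagger = nonempty lists, X^* = all lists (the empty list is id).
  Both K[X^dagger] and the tagged module K[-| X^dagger] are represented by finitely
  supported coefficient functions (poly mappings) supported on nonempty words;
  a tagged term -|m is represented by the word m.\<close>

definition valid_poly :: "('x list \<Rightarrow>\<^sub>0 'k::zero) \<Rightarrow> bool" where
  "valid_poly p \<longleftrightarrow> (\<forall>m\<in>Poly_Mapping.keys p. m \<noteq> [])"

definition semigroup_wellorder :: "('x list \<Rightarrow> 'x list \<Rightarrow> bool) \<Rightarrow> bool" where
  "semigroup_wellorder gt \<longleftrightarrow>
     (\<forall>a b. gt a b \<longrightarrow> a \<noteq> [] \<and> b \<noteq> []) \<and>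
     (\<forall>a. \<not> gt a a) \<and>
     (\<forall>a b c. gt a b \<longrightarrow> gt b c \<longrightarrow> gt a c) \<and>
     (\<forall>a b. a \<noteq> [] \<longrightarrow> b \<noteq> [] \<longrightarrow> a \<noteq> b \<longrightarrow> gt a b \<or> gt b a) \<and>
     wfp (\<lambda>a b. gt b a) \<and>
     (\<forall>m1 m2 u v. gt m1 m2 \<longrightarrow> gt (u @ m1 @ v) (u @ m2 @ v))"

definition LT :: "('x list \<Rightarrow> 'x list \<Rightarrow> bool) \<Rightarrow> ('x list \<Rightarrow>\<^sub>0 'k::zero) \<Rightarrow> 'x list" where
  "LT gt p = (THE m. m \<in> Poly_Mapping.keys p \<and> (\<forall>m'\<in>Poly_Mapping.keys p. m' \<noteq> m \<longrightarrow> gt m m'))"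

definition LC :: "('x list \<Rightarrow> 'x list \<Rightarrow> bool) \<Rightarrow> ('x list \<Rightarrow>\<^sub>0 'k::zero) \<Rightarrow> 'k" where
  "LC gt p = Poly_Mapping.lookup p (LT gt p)"

definition monic :: "('x list \<Rightarrow> 'x list \<Rightarrow> bool) \<Rightarrow> ('x list \<Rightarrow>\<^sub>0 'k::{zero,one}) \<Rightarrow> bool" where
  "monic gt p \<longleftrightarrow> p \<noteq> 0 \<and> LC gt p = 1"

text \<open>cmul k u p v = k * (u p v); with u the tag prefix this is k * (-| u p v).\<close>
definition cmul :: "'k::semiring_0 \<Rightarrow> 'x list \<Rightarrow> ('x list \<Rightarrow>\<^sub>0 'k) \<Rightarrow> 'x list \<Rightarrow> ('x list \<Rightarrow>\<^sub>0 'k)" where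
  "cmul k u p v = (\<Sum>m\<in>Poly_Mapping.keys p. Poly_Mapping.single (u @ m @ v) (k * Poly_Mapping.lookup p m))"

abbreviation mmul :: "'x list \<Rightarrow> ('x list \<Rightarrow>\<^sub>0 'k::semiring_1) \<Rightarrow> 'x list \<Rightarrow> ('x list \<Rightarrow>\<^sub>0 'k)" where
  "mmul u p v \<equiv> cmul 1 u p v"

definition red :: "('x list \<Rightarrow> 'x list \<Rightarrow> bool) \<Rightarrow> ('x list \<Rightarrow>\<^sub>0 'k::field) set \<Rightarrow> ('x list \<Rightarrow>\<^sub>0 'k) set
    \<Rightarrow> ('x list \<Rightarrow>\<^sub>0 'k) \<Rightarrow> ('x list \<Rightarrow>\<^sub>0 'k) \<Rightarrow> bool" where
  "red gt FT FP f g \<longleftrightarrow> valid_poly f \<and>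
     ((\<exists>fi\<in>FT. \<exists>v. Poly_Mapping.lookup f (LT gt fi @ v) \<noteq> 0 \<and>
                   g = f - cmul (Poly_Mapping.lookup f (LT gt fi @ v)) [] fi v) \<or>
      (\<exists>fi\<in>FP. \<exists>w v. Poly_Mapping.lookup f (w @ LT gt fi @ v) \<noteq> 0 \<and>
                   g = f - cmul (Poly_Mapping.lookup f (w @ LT gt fi @ v)) w fi v))"

definition red_equiv :: "('x list \<Rightarrow> 'x list \<Rightarrow> bool) \<Rightarrow> ('x list \<Rightarrow>\<^sub>0 'k::field) set \<Rightarrow> ('x list \<Rightarrow>\<^sub>0 'k) set
    \<Rightarrow> ('x list \<Rightarrow>\<^sub>0 'k) \<Rightarrow> ('x list \<Rightarrow>\<^sub>0 'k) \<Rightarrow> bool" where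
  "red_equiv gt FT FP = (\<lambda>f g. red gt FT FP f g \<or> red gt FT FP g f)\<^sup>*\<^sup>*"

definition tagged_spoly :: "('x list \<Rightarrow> 'x list \<Rightarrow> bool) \<Rightarrow> ('x list \<Rightarrow>\<^sub>0 'k::field) set \<Rightarrow> ('x list \<Rightarrow>\<^sub>0 'k) set
    \<Rightarrow> ('x list \<Rightarrow>\<^sub>0 'k) \<Rightarrow> bool" where
  "tagged_spoly gt FT FP f \<longleftrightarrow>
     (\<exists>f1\<in>FT. \<exists>f2\<in>FT. \<exists>v. LT gt f1 @ v = LT gt f2 \<and> f = mmul [] f1 v - f2) \<or>
     (\<exists>f1\<in>FT. \<exists>f2\<in>FP. \<exists>u v. LT gt f1 @ v = u @ LT gt f2 \<and> f = mmul [] f1 v - mmul u f2 []) \<or>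
     (\<exists>f1\<in>FT. \<exists>f2\<in>FP. \<exists>u v. LT gt f1 = u @ LT gt f2 @ v \<and> f = f1 - mmul u f2 v)"

definition untagged_spoly :: "('x list \<Rightarrow> 'x list \<Rightarrow> bool) \<Rightarrow> ('x list \<Rightarrow>\<^sub>0 'k::field) set \<Rightarrow> ('x list \<Rightarrow>\<^sub>0 'k) set
    \<Rightarrow> ('x list \<Rightarrow>\<^sub>0 'k) \<Rightarrow> bool" where
  "untagged_spoly gt FT FP f \<longleftrightarrow>
     (\<exists>f1\<in>FP. \<exists>f2\<in>FP. \<exists>u v. u @ LT gt f1 = LT gt f2 @ v \<and> f = mmul u f1 [] - mmul [] f2 v) \<or>
     (\<exists>f1\<in>FP. \<exists>f2\<in>FP. \<exists>u v. LT gt f1 = u @ LT gt f2 @ v \<and> f = f1 - mmul u f2 v)"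

end

theory Submission imports Defs begin

lemma cmul_lookup:
  "Poly_Mapping.lookup (cmul k u p v) x =
     (if \<exists>m. x = u @ m @ v then k * Poly_Mapping.lookup p (THE m. x = u @ m @ v) else 0)"
proof (cases "\<exists>m. x = u @ m @ v")
  case True
  then obtain m0 where x: "x = u @ m0 @ v" by blast
  have "Poly_Mapping.lookup (cmul k u p v) x =
        (\<Sum>m\<in>Poly_Mapping.keys p. if m = m0 then k * Poly_Mapping.lookup p m else 0)"
    unfolding cmul_def lookup_sum lookup_single x
    by (rule sum.cong) (auto simp: when_def)
  also have "\<dots> = k * Poly_Mapping.lookup p m0"
    by (simp add: sum.delta' in_keys_iff)
  finally show ?thesis using x by simp
next
  case False
  then show ?thesis unfolding cmul_def lookup_sum lookup_single
    by (auto simp: when_def intro!: sum.neutral)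
qed

lemma cmul_lookup_app [simp]:
  "Poly_Mapping.lookup (cmul k u p v) (u @ m @ v) = k * Poly_Mapping.lookup p m"
  by (simp add: cmul_lookup)

lemma cmul_lookup_other:
  "\<not> (\<exists>m. x = u @ m @ v) \<Longrightarrow> Poly_Mapping.lookup (cmul k u p v) x = 0"
  by (simp add: cmul_lookup)

lemma cmul_ext:
  assumes "\<And>m. Poly_Mapping.lookup P (u @ m @ v) = Poly_Mapping.lookup Q (u @ m @ v)"
    and "\<And>x. \<not> (\<exists>m. x = u @ m @ v) \<Longrightarrow> Poly_Mapping.lookup P x = Poly_Mapping.lookup Q x"
  shows "P = Q"
  apply (rule poly_mapping_eqI)
  subgoal for x using assms by (cases "\<exists>m. x = u @ m @ v") auto
  done

lemma cmul_diff: "cmul (k::'k::field) u (p - q) v = cmul k u p v - cmul k u q v"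
  by (rule cmul_ext[of _ u v]) (auto simp: lookup_minus cmul_lookup_other algebra_simps)

lemma cmul_add_k: "cmul (a + b::'k::field) u p v = cmul a u p v + cmul b u p v"
  by (rule cmul_ext[of _ u v]) (auto simp: lookup_add cmul_lookup_other algebra_simps)

lemma cmul_neg_k: "cmul (- a::'k::field) u p v = - cmul a u p v"
  by (rule cmul_ext[of _ u v]) (auto simp: cmul_lookup_other)

lemma cmul_zero_k: "cmul 0 u p v = 0"
  by (rule cmul_ext[of _ u v]) (auto simp: cmul_lookup_other)

lemma cmul_cmul: "cmul k u (cmul c u' p v') v = cmul (k * c) (u @ u') p (v' @ v)"
proof (rule poly_mapping_eqI)
  fix x
  show "Poly_Mapping.lookup (cmul k u (cmul c u' p v') v) x =
        Poly_Mapping.lookup (cmul (k * c) (u @ u') p (v' @ v)) x"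
  proof (cases "\<exists>m. x = u @ u' @ m @ v' @ v")
    case True
    then obtain m where x: "x = u @ (u' @ m @ v') @ v" by auto
    have "Poly_Mapping.lookup (cmul k u (cmul c u' p v') v) x = k * (c * Poly_Mapping.lookup p m)"
      unfolding x by (simp only: cmul_lookup_app)
    moreover have "Poly_Mapping.lookup (cmul (k * c) (u @ u') p (v' @ v)) x = k * c * Poly_Mapping.lookup p m"
      unfolding x by (metis append.assoc cmul_lookup_app)
    ultimately show ?thesis by (simp add: mult.assoc)
  next
    case False
    hence r: "Poly_Mapping.lookup (cmul (k * c) (u @ u') p (v' @ v)) x = 0"
      by (intro cmul_lookup_other) simp
    show ?thesis
    proof (cases "\<exists>y. x = u @ y @ v")
      case True
      then obtain y where y: "x = u @ y @ v" by blast
      with False have "\<not> (\<exists>m. y = u' @ m @ v')" by auto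
      then show ?thesis using r y by (simp add: cmul_lookup_other)
    next
      case False then show ?thesis using r by (simp add: cmul_lookup_other)
    qed
  qed
qed

lemma valid_iff: "valid_poly p \<longleftrightarrow> Poly_Mapping.lookup p [] = 0"
  unfolding valid_poly_def by (metis in_keys_iff)

lemma valid_add: "valid_poly p \<Longrightarrow> valid_poly q \<Longrightarrow> valid_poly (p + q)"
  by (simp add: valid_iff lookup_add)

lemma valid_cmul: "valid_poly p \<Longrightarrow> valid_poly (cmul k u p v)"
proof (cases "\<exists>m. [] = u @ m @ v")
  case True
  assume "valid_poly p"
  hence "Poly_Mapping.lookup p [] = 0" by (simp add: valid_iff)
  moreover from True have "u = []" "v = []" by auto
  ultimately show ?thesis using cmul_lookup_app[of k "[]" p "[]" "[]"] by (simp add: valid_iff)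
qed (auto simp: cmul_lookup_other valid_iff)


lemma valid_neg: "valid_poly p \<Longrightarrow> valid_poly (- p)"
  by (simp add: valid_iff)

lemma key_generic:
  fixes r :: "('x list \<Rightarrow>\<^sub>0 'k::field) \<Rightarrow> ('x list \<Rightarrow>\<^sub>0 'k) \<Rightarrow> bool"
  assumes vg: "valid_poly g" and vp: "valid_poly p" and lc: "Poly_Mapping.lookup p Tz = 1"
    and R: "\<And>g'. valid_poly g' \<Longrightarrow> Poly_Mapping.lookup g' (w @ Tz @ v) \<noteq> 0 \<Longrightarrow>
              r g' (g' - cmul (Poly_Mapping.lookup g' (w @ Tz @ v)) w p v)"
  shows "(\<lambda>a b. r a b \<or> r b a)\<^sup>*\<^sup>* g (g + cmul c w p v)"
proof -
  define T where "T = w @ Tz @ v"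
  define h where "h = g + cmul c w p v"
  have vh: "valid_poly h" unfolding h_def by (intro valid_add valid_cmul vg vp)
  have hT: "Poly_Mapping.lookup h T = Poly_Mapping.lookup g T + c"
    unfolding h_def T_def by (simp add: lookup_add lc)
  let ?S = "\<lambda>a b. r a b \<or> r b a"
  show ?thesis
  proof (cases "Poly_Mapping.lookup g T = 0")
    case True
    show ?thesis
    proof (cases "c = 0")
      case True then show ?thesis by (simp add: h_def cmul_zero_k)
    next
      case False
      with True hT have "Poly_Mapping.lookup h T = c" by simp
      with R[OF vh] False have "r h (h - cmul c w p v)" unfolding T_def by metis
      hence "r h g" by (simp add: h_def)
      then show ?thesis unfolding h_def[symmetric] by (intro r_into_rtranclp) simp
    qed
  next
    case False
    define g1 where "g1 = g - cmul (Poly_Mapping.lookup g T) w p v"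
    have s1: "r g g1" using R[OF vg] False unfolding g1_def T_def by metis
    show ?thesis
    proof (cases "Poly_Mapping.lookup h T = 0")
      case True
      with hT have "c = - Poly_Mapping.lookup g T" by (simp add: add_eq_0_iff)
      hence "g1 = h" by (simp add: g1_def h_def cmul_neg_k)
      with s1 show ?thesis unfolding h_def[symmetric] by (intro r_into_rtranclp) simp
    next
      case False
      have "r h (h - cmul (Poly_Mapping.lookup h T) w p v)" using R[OF vh] False unfolding T_def by metis
      moreover have "h - cmul (Poly_Mapping.lookup h T) w p v = g1"
        unfolding hT by (simp add: cmul_add_k g1_def h_def)
      ultimately have "r h g1" by simp
      hence "?S g1 h" by simp
      moreover have "?S g g1" using s1 by simp
      ultimately have "?S\<^sup>*\<^sup>* g h"
        by (metis (no_types, lifting) converse_rtranclp_into_rtranclp r_into_rtranclp)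
      then show ?thesis unfolding h_def .
    qed
  qed
qed

lemma monic_lookup: "monic gt p \<Longrightarrow> Poly_Mapping.lookup p (LT gt p) = 1"
  by (simp add: monic_def LC_def)

lemma EFT:
  assumes "\<forall>p\<in>FT. valid_poly p" "\<forall>p\<in>FT \<union> FP. monic gt p"
    and "valid_poly g" "p \<in> FT"
  shows "red_equiv gt FT FP g (g + cmul c [] p v)"
  unfolding red_equiv_def
  apply (rule key_generic[where Tz = "LT gt p" and w = "[]"])
  subgoal using assms by simp
  subgoal using assms by simp
  subgoal using assms by (simp add: monic_lookup)
  subgoal for g' unfolding red_def append_Nil using assms(4) by blast
  done

lemma EFP:
  assumes "\<forall>p\<in>FP. valid_poly p" "\<forall>p\<in>FT \<union> FP. monic gt p"
    and "valid_poly g" "p \<in> FP"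
  shows "red_equiv gt FT FP g (g + cmul c w p v)"
  unfolding red_equiv_def
  apply (rule key_generic[where Tz = "LT gt p"])
  subgoal using assms by simp
  subgoal using assms by simp
  subgoal using assms by (simp add: monic_lookup)
  subgoal for g' unfolding red_def using assms(4) by blast
  done

lemma red_equiv_sym: "red_equiv gt FT FP a b \<Longrightarrow> red_equiv gt FT FP b a"
proof -
  have "symp (\<lambda>a b. red gt FT FP a b \<or> red gt FT FP b a)" by (auto simp: symp_def)
  then have "symp (red_equiv gt FT FP)" unfolding red_equiv_def by (rule symp_rtranclp)
  then show "red_equiv gt FT FP a b \<Longrightarrow> red_equiv gt FT FP b a" by (rule sympD)
qed

lemma red_equiv_trans: "red_equiv gt FT FP a b \<Longrightarrow> red_equiv gt FT FP b c \<Longrightarrow> red_equiv gt FT FP a c"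
  unfolding red_equiv_def by (rule rtranclp_trans)

lemma red_equiv_step: "red gt FT FP a b \<Longrightarrow> red_equiv gt FT FP a b"
  unfolding red_equiv_def by (intro r_into_rtranclp) simp

lemma back_equiv:
  fixes FT FP FTa FPa :: "('x list \<Rightarrow>\<^sub>0 'k::field) set"
  assumes step: "\<And>s t. red gt FTa FPa s t \<Longrightarrow> red_equiv gt FT FP s t"
    and "red_equiv gt FTa FPa g h"
  shows "red_equiv gt FT FP g h"
  using assms(2) unfolding red_equiv_def[of gt FTa FPa]
proof (induction rule: rtranclp_induct)
  case base then show ?case unfolding red_equiv_def by (rule rtranclp.rtrancl_refl)
next
  case (step y z)
  from step(2) have "red_equiv gt FT FP y z"
  proof
    assume "red gt FTa FPa y z" then show ?thesis by (rule assms(1))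
  next
    assume "red gt FTa FPa z y" then have "red_equiv gt FT FP z y" by (rule assms(1))
    then show ?thesis by (rule red_equiv_sym)
  qed
  with step(3) show ?case by (rule red_equiv_trans)
qed

lemma fwd:
  fixes FT FP FTa FPa :: "('x list \<Rightarrow>\<^sub>0 'k::field) set"
  assumes "\<And>s t. red gt FT FP s t \<Longrightarrow> red gt FTa FPa s t"
    and "red_equiv gt FT FP g h"
  shows "red_equiv gt FTa FPa g h"
  using assms(2) unfolding red_equiv_def
proof (induction rule: rtranclp_induct)
  case base then show ?case by (rule rtranclp.rtrancl_refl)
next
  case (step y z)
  from step(2) have "red gt FTa FPa y z \<or> red gt FTa FPa z y"
    by (elim disjE) (simp_all add: assms(1))
  with step(3) show ?case by (rule rtranclp.rtrancl_into_rtrancl)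
qed

lemma two_steps:
  assumes "red_equiv gt FT FP s (s + a)" "red_equiv gt FT FP (s + a) (s + a + b)" "t = s + a + b"
  shows "red_equiv gt FT FP s t"
  unfolding assms(3) by (rule red_equiv_trans[OF assms(1) assms(2)])

lemma step_tagged:
  fixes FT FP :: "('x list \<Rightarrow>\<^sub>0 'k::field) set"
  assumes vT: "\<forall>p\<in>FT. valid_poly p" and vP: "\<forall>p\<in>FP. valid_poly p"
    and mo: "\<forall>p\<in>FT \<union> FP. monic gt p"
    and ts: "tagged_spoly gt FT FP f"
  shows "red gt (insert f FT) FP s t \<Longrightarrow> red_equiv gt FT FP s t"
proof -
  have main: "red_equiv gt FT FP s (s - cmul k [] f v)" if vs: "valid_poly s" for k v
    using ts unfolding tagged_spoly_def
  proof (elim disjE bexE exE conjE)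
    fix f1 f2 v1 assume f1: "f1 \<in> FT" and f2: "f2 \<in> FT" and fe: "f = mmul [] f1 v1 - f2"
    have eq: "s - cmul k [] f v = s + cmul (-k) [] f1 (v1 @ v) + cmul k [] f2 v"
      by (simp add: fe cmul_diff cmul_cmul cmul_neg_k)
    show ?thesis
      by (rule two_steps[OF _ _ eq]; rule EFT[OF vT mo])
         (auto intro!: valid_add valid_cmul vs f1 f2 simp: vT f1)
  next
    fix f1 f2 u v1 assume f1: "f1 \<in> FT" and f2: "f2 \<in> FP" and fe: "f = mmul [] f1 v1 - mmul u f2 []"
    have eq: "s - cmul k [] f v = s + cmul (-k) [] f1 (v1 @ v) + cmul k u f2 v"
      by (simp add: fe cmul_diff cmul_cmul cmul_neg_k)
    show ?thesis
      by (rule two_steps[OF _ _ eq], rule EFT[OF vT mo], rule vs, rule f1, rule EFP[OF vP mo])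
         (auto intro!: valid_add valid_cmul vs f1 f2 simp: vT f1)
  next
    fix f1 f2 u v1 assume f1: "f1 \<in> FT" and f2: "f2 \<in> FP" and fe: "f = f1 - mmul u f2 v1"
    have eq: "s - cmul k [] f v = s + cmul (-k) [] f1 v + cmul k u f2 (v1 @ v)"
      by (simp add: fe cmul_diff cmul_cmul cmul_neg_k)
    show ?thesis
      by (rule two_steps[OF _ _ eq], rule EFT[OF vT mo], rule vs, rule f1, rule EFP[OF vP mo])
         (auto intro!: valid_add valid_cmul vs f1 f2 simp: vT f1)
  qed
  assume r: "red gt (insert f FT) FP s t"
  then have vs: "valid_poly s" by (simp add: red_def)
  show ?thesis
  proof (cases "red gt FT FP s t")
    case True then show ?thesis by (rule red_equiv_step)
  next
    case False
    with r obtain v where "t = s - cmul (Poly_Mapping.lookup s (LT gt f @ v)) [] f v"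
      unfolding red_def by blast
    then show ?thesis using main[OF vs] by simp
  qed
qed

lemma step_untagged:
  fixes FT FP :: "('x list \<Rightarrow>\<^sub>0 'k::field) set"
  assumes vT: "\<forall>p\<in>FT. valid_poly p" and vP: "\<forall>p\<in>FP. valid_poly p"
    and mo: "\<forall>p\<in>FT \<union> FP. monic gt p"
    and ts: "untagged_spoly gt FT FP f"
  shows "red gt FT (insert f FP) s t \<Longrightarrow> red_equiv gt FT FP s t"
proof -
  have main: "red_equiv gt FT FP s (s - cmul k w f v)" if vs: "valid_poly s" for k w v
    using ts unfolding untagged_spoly_def
  proof (elim disjE bexE exE conjE)
    fix f1 f2 u v1 assume f1: "f1 \<in> FP" and f2: "f2 \<in> FP" and fe: "f = mmul u f1 [] - mmul [] f2 v1"
    have eq: "s - cmul k w f v = s + cmul (-k) (w @ u) f1 v + cmul k w f2 (v1 @ v)"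
      by (simp add: fe cmul_diff cmul_cmul cmul_neg_k)
    show ?thesis
      by (rule two_steps[OF _ _ eq]; rule EFP[OF vP mo])
         (auto intro!: valid_add valid_cmul vs f1 f2 simp: vP f1)
  next
    fix f1 f2 u v1 assume f1: "f1 \<in> FP" and f2: "f2 \<in> FP" and fe: "f = f1 - mmul u f2 v1"
    have eq: "s - cmul k w f v = s + cmul (-k) w f1 v + cmul k (w @ u) f2 (v1 @ v)"
      by (simp add: fe cmul_diff cmul_cmul cmul_neg_k)
    show ?thesis
      by (rule two_steps[OF _ _ eq]; rule EFP[OF vP mo])
         (auto intro!: valid_add valid_cmul vs f1 f2 simp: vP f1)
  qed
  assume r: "red gt FT (insert f FP) s t"
  then have vs: "valid_poly s" by (simp add: red_def)
  show ?thesis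
  proof (cases "red gt FT FP s t")
    case True then show ?thesis by (rule red_equiv_step)
  next
    case False
    with r obtain w v where "t = s - cmul (Poly_Mapping.lookup s (w @ LT gt f @ v)) w f v"
      unfolding red_def by blast
    then show ?thesis using main[OF vs] by simp
  qed
qed

theorem lemma4p7:
  fixes gt :: "'x list \<Rightarrow> 'x list \<Rightarrow> bool"
    and FT FP :: "('x list \<Rightarrow>\<^sub>0 'k::field) set"
    and f :: "'x list \<Rightarrow>\<^sub>0 'k"
  assumes "semigroup_wellorder gt"
    and "\<forall>p\<in>FT. valid_poly p" and "\<forall>p\<in>FP. valid_poly p"
    and "\<forall>p\<in>FT \<union> FP. monic gt p"
  shows "(tagged_spoly gt FT FP f \<longrightarrow>
           (\<forall>g h. valid_poly g \<longrightarrow> valid_poly h \<longrightarrow>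
              (red_equiv gt FT FP g h \<longleftrightarrow> red_equiv gt (insert f FT) FP g h)))
       \<and> (untagged_spoly gt FT FP f \<longrightarrow>
           (\<forall>g h. valid_poly g \<longrightarrow> valid_poly h \<longrightarrow>
              (red_equiv gt FT FP g h \<longleftrightarrow> red_equiv gt FT (insert f FP) g h)))"
proof (intro conjI impI allI)
  fix g h :: "'x list \<Rightarrow>\<^sub>0 'k"
  assume ts: "tagged_spoly gt FT FP f"
  show "red_equiv gt FT FP g h = red_equiv gt (insert f FT) FP g h"
  proof
    assume "red_equiv gt FT FP g h"
    then show "red_equiv gt (insert f FT) FP g h"
      by (rule fwd[rotated]) (auto simp: red_def)
  next
    assume "red_equiv gt (insert f FT) FP g h"
    then show "red_equiv gt FT FP g h"
      by (rule back_equiv[rotated]) (rule step_tagged[OF assms(2-4) ts])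
  qed
next
  fix g h :: "'x list \<Rightarrow>\<^sub>0 'k"
  assume ts: "untagged_spoly gt FT FP f"
  show "red_equiv gt FT FP g h = red_equiv gt FT (insert f FP) g h"
  proof
    assume "red_equiv gt FT FP g h"
    then show "red_equiv gt FT (insert f FP) g h"
      by (rule fwd[rotated]) (auto simp: red_def)
  next
    assume "red_equiv gt FT (insert f FP) g h"
    then show "red_equiv gt FT FP g h"
      by (rule back_equiv[rotated]) (rule step_untagged[OF assms(2-4) ts])
  qed
qed

end
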